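(* Let $w>0$ and $c_w=\sum_{y=-\infty}^{\infty}e^{-y^2/(2w^2)}$. For integers $x,h$ with $|x|\leq h$ and $h$ even, $$\frac{1}{c_w}\sum_{y=-\infty}^{\infty}e^{-\frac{(y\pm x)^2+y^2}{4w^2}}\geq e^{-\frac{h^2}{8w^2}}.$$ *)

theory Defs
  imports "HOL-Analysis.Analysis"
begin

definition c_w :: "real \<Rightarrow> real" where
  "c_w w = (\<Sum>\<^sub>\<infinity>y\<in>(UNIV::int set). exp (- (real_of_int y)\<^sup>2 / (2 * w\<^sup>2)))"

end

theory Submission
  imports Defs
begin

lemma gauss_nat_summable:
  fixes a :: real assumes a: "a > 0"
  shows "(\<lambda>n::nat. exp (- a * (real n)\<^sup>2)) summable_on UNIV"
proof (rule summable_nonneg_imp_summable_on)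
  show "summable (\<lambda>n::nat. exp (- a * (real n)\<^sup>2))"
  proof (rule summable_comparison_test[where g = "\<lambda>n. exp (- a) ^ n"])
    show "summable (\<lambda>n. exp (- a) ^ n)" using a by (intro summable_geometric) auto
    show "\<exists>N. \<forall>n\<ge>N. norm (exp (- a * (real n)\<^sup>2)) \<le> exp (- a) ^ n"
    proof (intro exI allI impI)
      fix n :: nat
      have "real n \<le> (real n)\<^sup>2"
        by (cases n) (auto simp: power2_eq_square)
      hence "- a * (real n)\<^sup>2 \<le> - a * real n" using a by (simp add: mult_left_mono)
      thus "norm (exp (- a * (real n)\<^sup>2)) \<le> exp (- a) ^ n"
        by (simp add: exp_of_nat_mult[symmetric] mult.commute)
    qed
  qed
qed auto

lemma gauss_int_summable:
  fixes a :: real assumes a: "a > 0"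
  shows "(\<lambda>n::int. exp (- a * (real_of_int n)\<^sup>2)) summable_on UNIV"
proof -
  let ?f = "\<lambda>n::int. exp (- a * (real_of_int n)\<^sup>2)"
  have U: "(UNIV::int set) = range int \<union> range (\<lambda>n. - int n - 1)"
  proof -
    have "x \<in> range int \<union> range (\<lambda>n. - int n - 1)" for x :: int
    proof (cases "x \<ge> 0")
      case True thus ?thesis by (metis UnI1 nonneg_int_cases rangeI)
    next
      case False
      hence "x = - int (nat (- x - 1)) - 1" by simp
      thus ?thesis by blast
    qed
    thus ?thesis by blast
  qed
  have s1: "?f summable_on range int"
    using summable_on_reindex[of int UNIV ?f] gauss_nat_summable[OF a]
    by (simp add: o_def)
  have s2: "?f summable_on range (\<lambda>n. - int n - 1)"
  proof -
    have inj: "inj (\<lambda>n::nat. - int n - 1)" by (auto simp: inj_def)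
    have "(\<lambda>n::nat. ?f (- int n - 1)) summable_on UNIV"
    proof (rule summable_on_comparison_test[OF gauss_nat_summable[OF a]])
      fix n :: nat
      have "(real n)\<^sup>2 \<le> (real n + 1)\<^sup>2" by (simp add: power_mono)
      hence "- a * (real n + 1)\<^sup>2 \<le> - a * (real n)\<^sup>2" using a by simp
      moreover have "(real_of_int (- int n - 1))\<^sup>2 = (real n + 1)\<^sup>2"
        by (simp add: power2_eq_square algebra_simps)
      ultimately show "?f (- int n - 1) \<le> exp (- a * (real n)\<^sup>2)" by simp
    qed auto
    thus ?thesis using summable_on_reindex[OF inj, of ?f] by (simp add: o_def)
  qed
  have "?f summable_on (range int \<union> range (\<lambda>n. - int n - 1))"
    by (rule summable_on_Un_disjoint[OF s1 s2]) auto
  thus ?thesis using U by simp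
qed

lemma amgm_exp: "exp (A::real) + exp B \<ge> 2 * exp ((A + B) / 2)"
proof -
  have "exp A + exp B - 2 * exp ((A + B) / 2) = (exp (A/2) - exp (B/2))\<^sup>2"
  proof -
    have "exp (A/2) * exp (A/2) = exp A" by (simp add: exp_add[symmetric])
    moreover have "exp (B/2) * exp (B/2) = exp B" by (simp add: exp_add[symmetric])
    moreover have "exp (A/2) * exp (B/2) = exp ((A + B) / 2)" by (simp add: exp_add[symmetric] add_divide_distrib)
    ultimately show ?thesis by (simp add: power2_eq_square algebra_simps)
  qed
  thus ?thesis by (smt (verit) zero_le_power2)
qed

theorem lemma3:
  fixes w :: real and x h :: int and s :: int
  assumes "w > 0" and "\<bar>x\<bar> \<le> h" and "even h" and "s \<in> {1, -1}"
  shows "(1 / c_w w) * (\<Sum>\<^sub>\<infinity>y\<in>(UNIV::int set).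
            exp (- ((real_of_int (y + s * x))\<^sup>2 + (real_of_int y)\<^sup>2) / (4 * w\<^sup>2)))
         \<ge> exp (- (real_of_int h)\<^sup>2 / (8 * w\<^sup>2))"
proof -
  define z where "z = s * x"
  have zh: "\<bar>z\<bar> \<le> h" using assms(2,4) by (auto simp: z_def)
  define G where "G = (\<lambda>y::int. exp (- (real_of_int y)\<^sup>2 / (2 * w\<^sup>2)))"
  define T where "T = (\<lambda>y::int. exp (- ((real_of_int (y + z))\<^sup>2 + (real_of_int y)\<^sup>2) / (4 * w\<^sup>2)))"
  have w2: "w\<^sup>2 > 0" using assms(1) by simp
  have Geq: "G = (\<lambda>y. exp (- (1 / (2 * w\<^sup>2)) * (real_of_int y)\<^sup>2))"
    by (simp add: G_def)
  have Gs: "G summable_on UNIV"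
    unfolding Geq by (rule gauss_int_summable) (use w2 in simp)
  have Gpos: "\<And>y. G y \<ge> 0" by (simp add: G_def)
  have cw: "c_w w = infsum G UNIV" by (simp add: c_w_def G_def)
  have Gshift: "infsum (\<lambda>y. G (y + k)) UNIV = infsum G UNIV" for k :: int
    by (rule infsum_reindex_bij_betw) (rule bij_betwI[where g = "\<lambda>y. y - k"], auto)
  have Gshifts: "(\<lambda>y. G (y + k)) summable_on UNIV" for k :: int
  proof -
    have "bij_betw (\<lambda>y::int. y + k) UNIV UNIV"
      by (rule bij_betwI[where g = "\<lambda>y. y - k"]) auto
    thus ?thesis using summable_on_reindex_bij_betw[of "\<lambda>y. y + k" UNIV UNIV G] Gs by simp
  qed
  have T_le: "T y \<le> exp (- (1 / (4 * w\<^sup>2)) * (real_of_int y)\<^sup>2)" for y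
    unfolding T_def using w2 by (auto simp: divide_simps)
  have Ts: "T summable_on UNIV"
    by (rule summable_on_comparison_test[OF gauss_int_summable T_le]) (use w2 in \<open>auto simp: T_def\<close>)
  have cpos: "c_w w > 0"
  proof -
    have "infsum G {0} \<le> infsum G UNIV"
      by (rule infsum_mono_neutral) (auto simp: Gs Gpos)
    thus ?thesis by (simp add: cw G_def)
  qed
  have key: "infsum T UNIV \<ge> exp (- (real_of_int h)\<^sup>2 / (8 * w\<^sup>2)) * c_w w"
  proof (cases "even z")
    case True
    then obtain k where k: "z = 2 * k" by blast
    have "T y = exp (- (real_of_int z)\<^sup>2 / (8 * w\<^sup>2)) * G (y + k)" for y
      unfolding T_def G_def k using w2
      by (simp add: exp_add[symmetric] divide_simps power2_eq_square) (simp add: algebra_simps)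
    hence "T = (\<lambda>y. exp (- (real_of_int z)\<^sup>2 / (8 * w\<^sup>2)) * G (y + k))" by (intro ext)
    hence "infsum T UNIV = exp (- (real_of_int z)\<^sup>2 / (8 * w\<^sup>2)) * infsum (\<lambda>y. G (y + k)) UNIV"
      by (simp only: infsum_cmult_right Gshifts)
    also have "\<dots> = exp (- (real_of_int z)\<^sup>2 / (8 * w\<^sup>2)) * c_w w" by (simp add: Gshift cw)
    finally have eq: "infsum T UNIV = exp (- (real_of_int z)\<^sup>2 / (8 * w\<^sup>2)) * c_w w" .
    have "(real_of_int z)\<^sup>2 \<le> (real_of_int h)\<^sup>2"
      using zh by (metis abs_ge_zero abs_of_nonneg of_int_abs of_int_le_iff order_trans power2_abs power_mono)
    hence "exp (- (real_of_int h)\<^sup>2 / (8 * w\<^sup>2)) \<le> exp (- (real_of_int z)\<^sup>2 / (8 * w\<^sup>2))"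
      using w2 by (simp add: divide_simps)
    thus ?thesis using eq cpos by simp
  next
    case False
    then obtain k where k: "z = 2 * k + 1" by (metis odd_two_times_div_two_succ)
    define E where "E = exp (- ((real_of_int z)\<^sup>2 + 1) / (8 * w\<^sup>2))"
    have pt: "T y + T (y - 1) \<ge> 2 * (E * G (y + k))" for y
    proof -
      have "T y + T (y - 1) \<ge> 2 * exp ((- ((real_of_int (y + z))\<^sup>2 + (real_of_int y)\<^sup>2) / (4 * w\<^sup>2)
          + - ((real_of_int (y - 1 + z))\<^sup>2 + (real_of_int (y - 1))\<^sup>2) / (4 * w\<^sup>2)) / 2)"
        unfolding T_def by (rule amgm_exp)
      also have "(- ((real_of_int (y + z))\<^sup>2 + (real_of_int y)\<^sup>2) / (4 * w\<^sup>2)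
          + - ((real_of_int (y - 1 + z))\<^sup>2 + (real_of_int (y - 1))\<^sup>2) / (4 * w\<^sup>2)) / 2
          = - ((real_of_int z)\<^sup>2 + 1) / (8 * w\<^sup>2) + - (real_of_int (y + k))\<^sup>2 / (2 * w\<^sup>2)"
        unfolding k using w2 by (simp add: divide_simps power2_eq_square) (simp add: algebra_simps)
      finally show ?thesis unfolding E_def G_def mult_exp_exp by simp
    qed
    have Tsh: "infsum (\<lambda>y. T (y - 1)) UNIV = infsum T UNIV"
      by (rule infsum_reindex_bij_betw) (rule bij_betwI[where g = "\<lambda>y::int. y + 1"], auto)
    have Tshs: "(\<lambda>y. T (y - 1)) summable_on UNIV"
    proof -
      have "bij_betw (\<lambda>y::int. y - 1) UNIV UNIV"
        by (rule bij_betwI[where g = "\<lambda>y::int. y + 1"]) auto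
      thus ?thesis using summable_on_reindex_bij_betw[of "\<lambda>y. y - 1" UNIV UNIV T] Ts by simp
    qed
    have Es: "(\<lambda>y. 2 * (E * G (y + k))) summable_on UNIV"
      by (intro summable_on_cmult_right Gshifts)
    have "2 * (E * c_w w) = infsum (\<lambda>y. 2 * (E * G (y + k))) UNIV"
      by (simp add: infsum_cmult_right Gshifts summable_on_cmult_right Gshift cw)
    also have "\<dots> \<le> infsum (\<lambda>y. T y + T (y - 1)) UNIV"
      by (rule infsum_mono[OF Es summable_on_add[OF Ts Tshs] pt])
    also have "\<dots> = 2 * infsum T UNIV"
      by (simp add: infsum_add Ts Tshs Tsh)
    finally have ge: "E * c_w w \<le> infsum T UNIV" by simp
    have "\<bar>z\<bar> \<noteq> h" using False assms(3) by (metis even_abs_add_iff add.right_neutral)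
    hence zh1: "\<bar>z\<bar> + 1 \<le> h" using zh by simp
    have "(real_of_int z)\<^sup>2 + 1 \<le> (real_of_int h)\<^sup>2"
    proof -
      have "real_of_int \<bar>z\<bar> + 1 \<le> real_of_int h" using zh1 by linarith
      hence "(real_of_int \<bar>z\<bar> + 1)\<^sup>2 \<le> (real_of_int h)\<^sup>2" by (intro power_mono) auto
      thus ?thesis by (simp add: power2_eq_square algebra_simps)
    qed
    hence "exp (- (real_of_int h)\<^sup>2 / (8 * w\<^sup>2)) \<le> E"
      unfolding E_def using w2 by (simp add: divide_simps)
    thus ?thesis using ge cpos by (smt (verit) mult_right_mono)
  qed
  have "exp (- (real_of_int h)\<^sup>2 / (8 * w\<^sup>2)) \<le> infsum T UNIV / c_w w"
    using key cpos by (simp add: divide_simps)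
  thus ?thesis by (simp add: T_def z_def)
qed

end
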